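(* Consider the following percolation on $[L]\times\{0,1,2,\dots\}$: the edges joining $(i,0)$ and $(i+1,0)$ are open for all $i$; if $(i,t)$ belongs to an open edge, then with probability at least $0.99$ the edges joining $(i,t)$ to $(i,t+1)$ and to $(i\pm1,t+1)$ are all open, these events occurring independently. Then with probability tending to $1$ as $L\to\infty$, the percolation reaches time $1.01^L$: there exists a path of open edges connecting some vertex $(i,0)$ and some vertex $(j,1.01^L)$ with $i,j\in[L]$. *)

theory Defs
  imports "HOL-Probability.Probability"
begin

text \<open>Vertices are pairs (i,t) with i in [L] = {1..L} (space) and t a natural number (time).
  Given the outcome of the coins X i t (X i t = True means: if (i,t) belongs to an open
  edge, then its three upward edges are opened), the open edges are the least family
  containing the time-0 horizontal edges and closed under the upward opening rule.\<close>

inductive open_edge :: "nat \<Rightarrow> (nat \<Rightarrow> nat \<Rightarrow> bool) \<Rightarrow> nat \<times> nat \<Rightarrow> nat \<times> nat \<Rightarrow> bool"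
  for L :: nat and X :: "nat \<Rightarrow> nat \<Rightarrow> bool" where
  base: "1 \<le> i \<Longrightarrow> i + 1 \<le> L \<Longrightarrow> open_edge L X (i, 0) (i + 1, 0)"
| up: "(\<exists>w. open_edge L X (i, t) w \<or> open_edge L X w (i, t)) \<Longrightarrow> X i t \<Longrightarrow>
       1 \<le> j \<Longrightarrow> j \<le> L \<Longrightarrow> i \<le> j + 1 \<Longrightarrow> j \<le> i + 1 \<Longrightarrow>
       open_edge L X (i, t) (j, t + 1)"

definition open_adj :: "nat \<Rightarrow> (nat \<Rightarrow> nat \<Rightarrow> bool) \<Rightarrow> nat \<times> nat \<Rightarrow> nat \<times> nat \<Rightarrow> bool" where
  "open_adj L X u v \<longleftrightarrow> open_edge L X u v \<or> open_edge L X v u"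

definition reaches :: "nat \<Rightarrow> (nat \<Rightarrow> nat \<Rightarrow> bool) \<Rightarrow> nat \<Rightarrow> bool" where
  "reaches L X T \<longleftrightarrow> (\<exists>i j. i \<in> {1..L} \<and> j \<in> {1..L} \<and> (open_adj L X)\<^sup>*\<^sup>* (i, 0) (j, T))"

end

theory Submission
  imports Defs
begin

definition seg :: "nat \<Rightarrow> nat \<Rightarrow> nat set" where "seg a b = {min a b..max a b}"

definition allowed :: "nat\<times>nat \<Rightarrow> nat\<times>nat \<Rightarrow> bool" where
"allowed u v \<longleftrightarrow> v = (fst u + 1, snd u) \<or> (fst v \<le> fst u \<and> (snd v + (fst u - fst v) + 1 = snd u \<or> snd v = snd u + (fst u - fst v) + 1))"

definition cost :: "nat\<times>nat \<Rightarrow> nat\<times>nat \<Rightarrow> nat" where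
"cost u v = (if v = (fst u + 1, snd u) then 0 else fst u + 1 - fst v)"

fun okc :: "(nat\<times>nat) list \<Rightarrow> bool" where
"okc (u # v # r) = (allowed u v \<and> okc (v # r))" | "okc _ = True"

fun Kc :: "(nat\<times>nat) list \<Rightarrow> nat" where
"Kc (u # v # r) = cost u v + Kc (v # r)" | "Kc _ = 0"

lemma okc_append: "g1 \<noteq> [] \<Longrightarrow> g2 \<noteq> [] \<Longrightarrow> okc (g1 @ g2) = (okc g1 \<and> allowed (last g1) (hd g2) \<and> okc g2)"
proof (induction g1 rule: okc.induct)
  case (1 u v r) then show ?case by simp
next
  case ("2_1") then show ?case by simp
next
  case ("2_2" u) then show ?case by (cases g2) auto
qed

lemma Kc_append: "g1 \<noteq> [] \<Longrightarrow> g2 \<noteq> [] \<Longrightarrow> Kc (g1 @ g2) = Kc g1 + cost (last g1) (hd g2) + Kc g2"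
proof (induction g1 rule: Kc.induct)
  case (1 u v r) then show ?case by simp
next
  case ("2_1") then show ?case by simp
next
  case ("2_2" u) then show ?case by (cases g2) auto
qed

locale perc = fixes L :: nat and X :: "nat \<Rightarrow> nat \<Rightarrow> bool"
begin

primrec act :: "nat \<Rightarrow> nat set" where
"act 0 = {1..L}"
| "act (Suc t) = {j\<in>{1..L}. \<exists>i\<in>act t. X i t \<and> i \<le> j+1 \<and> j \<le> i+1}"

definition H where "H t = {1..L} - act t"
definition Cl where "Cl t = {i\<in>{1..L}. \<not> X i t}"
definition D where "D t = H t \<union> Cl t"

lemma act_sub: "act t \<subseteq> {1..L}" by (cases t) auto

lemma H_sub: "H t \<subseteq> {1..L}" by (auto simp: H_def)
lemma D_sub: "D t \<subseteq> {1..L}" by (auto simp: D_def H_def Cl_def)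
lemma H_D: "H t \<subseteq> D t" by (auto simp: D_def)
lemma H0: "H 0 = {}" by (auto simp: H_def)

lemma H_Suc: "j \<in> H (Suc t) \<longleftrightarrow> j \<in> {1..L} \<and> (\<forall>i\<in>{1..L}. i \<le> j+1 \<and> j \<le> i+1 \<longrightarrow> i \<in> D t)"
  using act_sub[of t] by (auto simp: H_def D_def Cl_def)

primrec flowN :: "nat \<Rightarrow> nat \<Rightarrow> nat \<Rightarrow> nat \<Rightarrow> bool" where
"flowN 0 i s j = (i = j)"
| "flowN (Suc n) i s j = (\<exists>i'. i' \<in> H (Suc s) \<and> seg i i' \<subseteq> D s \<and> flowN n i' (Suc s) j)"

definition Z where "Z t x m = {(i,s). s \<le> t \<and> (\<exists>j. x \<le> j \<and> j \<le> m \<and> flowN (t - s) i s j)}"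

lemma one_step:
  assumes "seg i1 i2 \<subseteq> D s" "j1 \<in> H (Suc s)" "j2 \<in> H (Suc s)" "seg i1 j1 \<subseteq> D s" "seg i2 j2 \<subseteq> D s"
  shows "seg j1 j2 \<subseteq> H (Suc s)"
proof
  fix z assume z: "z \<in> seg j1 j2"
  show "z \<in> H (Suc s)"
  proof (cases "z = j1 \<or> z = j2")
    case True then show ?thesis using assms by auto
  next
    case False
    have cov: "w \<in> D s" if "min j1 j2 \<le> w" "w \<le> max j1 j2" for w
    proof -
      have "w \<in> seg i1 j1 \<or> w \<in> seg i1 i2 \<or> w \<in> seg i2 j2"
        using that unfolding seg_def by auto
      then show ?thesis using assms by auto
    qed
    have "j1 \<in> {1..L}" "j2 \<in> {1..L}" using assms(2,3) H_sub[of "Suc s"] by auto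
    then have zL: "z \<in> {1..L}" using z by (auto simp: seg_def)
    show ?thesis unfolding H_Suc
    proof (intro conjI ballI impI zL)
      fix i assume "i \<in> {1..L}" "i \<le> z + 1 \<and> z \<le> i + 1"
      then show "i \<in> D s" using False z by (intro cov) (auto simp: seg_def)
    qed
  qed
qed

lemma flow_det:
  "seg i1 i2 \<subseteq> D s \<Longrightarrow> flowN (Suc n) i1 s j1 \<Longrightarrow> flowN (Suc n) i2 s j2 \<Longrightarrow> seg j1 j2 \<subseteq> H (s + Suc n)"
proof (induction n arbitrary: s i1 i2)
  case 0
  then show ?case using one_step by auto
next
  case (Suc n)
  from Suc.prems(2) obtain a where a: "a \<in> H (Suc s)" "seg i1 a \<subseteq> D s" "flowN (Suc n) a (Suc s) j1" by auto
  from Suc.prems(3) obtain b where b: "b \<in> H (Suc s)" "seg i2 b \<subseteq> D s" "flowN (Suc n) b (Suc s) j2" by auto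
  have "seg a b \<subseteq> H (Suc s)" using one_step[OF Suc.prems(1) a(1) b(1) a(2) b(2)] .
  then have "seg a b \<subseteq> D (Suc s)" using H_D by blast
  from Suc.IH[OF this a(3) b(3)] show ?case by simp
qed

lemma flow_app:
  "flowN n i s j' \<Longrightarrow> j \<in> H (Suc (s+n)) \<Longrightarrow> seg j' j \<subseteq> D (s + n) \<Longrightarrow> flowN (Suc n) i s j"
proof (induction n arbitrary: i s)
  case 0 then show ?case by auto
next
  case (Suc n)
  from Suc.prems(1) obtain a where a: "a \<in> H (Suc s)" "seg i a \<subseteq> D s" "flowN n a (Suc s) j'" by auto
  have "flowN (Suc n) a (Suc s) j" using Suc.IH[OF a(3)] Suc.prems by simp
  then show ?case using a by auto
qed

lemma flow_D: "flowN (Suc n) i s j \<Longrightarrow> i \<in> D s"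
  by (auto simp: seg_def)

lemma Z_disj:
  assumes "\<not> (m \<in> H t \<and> m + 1 \<in> H t)"
  shows "Z t x m \<inter> Z t (m+1) y = {}"
proof (rule ccontr)
  assume "Z t x m \<inter> Z t (m+1) y \<noteq> {}"
  then obtain i s j j' where st: "s \<le> t" and j: "x \<le> j" "j \<le> m" "flowN (t - s) i s j"
    and j': "m + 1 \<le> j'" "j' \<le> y" "flowN (t - s) i s j'"
    unfolding Z_def by blast
  show False
  proof (cases "s = t")
    case True then show False using j j' by simp
  next
    case False
    then obtain n where n: "t - s = Suc n" by (cases "t - s") (use st in auto)
    have "i \<in> D s" using flow_D j(3) n by simp
    then have "seg i i \<subseteq> D s" by (simp add: seg_def)
    from flow_det[OF this, of n j j'] j(3) j'(3) n
    have "seg j j' \<subseteq> H (s + Suc n)" by simp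
    moreover have "s + Suc n = t" using n st by simp
    ultimately have "m \<in> H t" "m + 1 \<in> H t" using j j' by (auto simp: seg_def)
    then show False using assms by simp
  qed
qed

definition startc where "startc t x g = (if x = 1 then fst (hd g) = 1 else fst (hd g) + (t - snd (hd g)) = x \<and> snd (hd g) \<le> t)"
definition kL where "kL t x g = (if x = 1 then 0 else t - snd (hd g))"
definition endc where "endc t m g = (if m = L then fst (last g) = L else fst (last g) = m + (t - snd (last g)) \<and> snd (last g) \<le> t)"
definition kR where "kR t m g = (if m = L then 0 else t - snd (last g))"

definition SC where "SC t x m g \<longleftrightarrow> g \<noteq> [] \<and> distinct g \<and> set g \<subseteq> Z t x m \<and> (\<forall>u\<in>set g. fst u \<in> Cl (snd u))
  \<and> okc g \<and> startc t x g \<and> endc t m g \<and> (m \<notin> H t \<longrightarrow> last g = (m,t))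
  \<and> (m + 1 - x) + Kc g + kL t x g + kR t m g \<le> length g"

definition maxrun where "maxrun t x y \<longleftrightarrow> 1 \<le> x \<and> x \<le> y \<and> y \<le> L \<and> {x..y} \<subseteq> D t \<and> (x = 1 \<or> x - 1 \<notin> D t) \<and> (y = L \<or> y + 1 \<notin> D t)"

lemma SC_single: assumes "m \<in> Cl t" shows "SC t m m [(m,t)]"
proof -
  have "(m,t) \<in> Z t m m" by (auto simp: Z_def)
  then show ?thesis using assms
    by (auto simp: SC_def startc_def endc_def kL_def kR_def Cl_def)
qed

lemma SC_concat:
  assumes g1: "SC t x m g1" and g2: "SC t (m+1) y g2" and cut: "\<not> (m \<in> H t \<and> m + 1 \<in> H t)"
    and j: "last g1 = (m,t) \<or> hd g2 = (m+1,t)" and xm: "x \<le> m" and my: "m + 1 \<le> y" and mL: "m < L" and x1: "1 \<le> x"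
  shows "SC t x y (g1 @ g2)"
proof -
  have ne: "g1 \<noteq> []" "g2 \<noteq> []" using g1 g2 by (auto simp: SC_def)
  have dis: "set g1 \<inter> set g2 = {}" using Z_disj[OF cut, of x y] g1 g2 by (auto simp: SC_def)
  have Zs: "Z t x m \<union> Z t (m+1) y \<subseteq> Z t x y" using xm my unfolding Z_def by (auto; metis le_trans Suc_leD)
  have m1: "m + 1 \<noteq> 1" using x1 xm by simp
  have jun: "allowed (last g1) (hd g2) \<and> cost (last g1) (hd g2) = kR t m g1 + kL t (m+1) g2"
  proof (cases "last g1 = (m,t)")
    case True
    have kr: "kR t m g1 = 0" using True by (simp add: kR_def)
    from g2 have sc: "fst (hd g2) + (t - snd (hd g2)) = m + 1" "snd (hd g2) \<le> t"
      using m1 by (auto simp: SC_def startc_def)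
    show ?thesis
    proof (cases "snd (hd g2) = t")
      case True2: True
      then have "hd g2 = (m+1, t)" using sc by (cases "hd g2") auto
      then show ?thesis using True kr by (simp add: allowed_def cost_def kL_def)
    next
      case False
      then have ne2: "hd g2 \<noteq> (fst (last g1) + 1, snd (last g1))" using True by (cases "hd g2") auto
      show ?thesis using True kr sc False ne2 m1 by (auto simp: allowed_def cost_def kL_def)
    qed
  next
    case False
    then have h2: "hd g2 = (m+1,t)" using j by simp
    have kl: "kL t (m+1) g2 = 0" using h2 by (simp add: kL_def)
    from g1 have ec: "fst (last g1) = m + (t - snd (last g1))" "snd (last g1) \<le> t"
      using mL by (auto simp: SC_def endc_def)
    have "snd (last g1) \<noteq> t" using False ec by (cases "last g1") auto
    then have ne1: "hd g2 \<noteq> (fst (last g1) + 1, snd (last g1))" using h2 by auto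
    show ?thesis using h2 kl ec ne1 mL by (auto simp: allowed_def cost_def kR_def)
  qed
  have "okc (g1 @ g2)" using g1 g2 jun by (simp add: okc_append ne SC_def)
  moreover have "Kc (g1 @ g2) = Kc g1 + cost (last g1) (hd g2) + Kc g2" by (simp add: Kc_append ne)
  moreover have "startc t x (g1 @ g2) = startc t x g1" "kL t x (g1 @ g2) = kL t x g1"
    using ne by (simp_all add: startc_def kL_def)
  moreover have "endc t y (g1 @ g2) = endc t y g2" "kR t y (g1 @ g2) = kR t y g2"
    using ne by (simp_all add: endc_def kR_def)
  moreover have "last (g1 @ g2) = last g2" using ne by simp
  ultimately show ?thesis using g1 g2 dis Zs jun xm my
    by (auto simp: SC_def)
qed

lemma SC_Hrun:
  assumes IH: "\<forall>x y. maxrun t' x y \<longrightarrow> (\<exists>g. SC t' x y g)" and t: "t = Suc t'"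
    and sub: "{p..m} \<subseteq> H t" and pm: "p \<le> m" and lft: "p = 1 \<or> p - 1 \<notin> H t"
    and rgt: "m = L \<or> m + 1 \<notin> H t"
  shows "\<exists>g. SC t p m g"
proof -
  have "p \<in> H t" "m \<in> H t" using sub pm by auto
  then have pL: "1 \<le> p" "m \<le> L" using H_sub[of t] by auto
  define p' where "p' = (if p = 1 then 1 else p - 1)"
  define m' where "m' = (if m = L then L else m + 1)"
  have Dsub: "{p'..m'} \<subseteq> D t'"
  proof
    fix z assume z: "z \<in> {p'..m'}"
    define w where "w = max p (min m z)"
    have "w \<in> H (Suc t')" using sub t pm by (auto simp: w_def)
    moreover have "z \<in> {1..L}" using z pL by (auto simp: p'_def m'_def split: if_splits)
    moreover have "z \<le> w + 1 \<and> w \<le> z + 1" using z pm by (auto simp: w_def p'_def m'_def split: if_splits)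
    ultimately show "z \<in> D t'" unfolding H_Suc by blast
  qed
  have inH: "q \<in> H t" if "q \<in> {1..L}" "\<And>i. i \<in> {1..L} \<Longrightarrow> i \<le> q + 1 \<Longrightarrow> q \<le> i + 1 \<Longrightarrow> i \<in> D t'" for q
    using that unfolding t H_Suc by blast
  have p2: "p \<noteq> 2"
  proof
    assume p: "p = 2"
    have "1 \<in> H t"
    proof (rule inH)
      show "1 \<in> {1..L}" using pL p pm by auto
      fix i assume "i \<in> {1..L}" "i \<le> 1 + 1"
      then have "i \<in> {p'..m'}" using p pm pL by (auto simp: p'_def m'_def)
      then show "i \<in> D t'" using Dsub by auto
    qed
    then show False using lft p by auto
  qed
  have lmax: "p' = 1 \<or> p' - 1 \<notin> D t'"
  proof (cases "p = 1")
    case True then show ?thesis by (simp add: p'_def)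
  next
    case False
    show ?thesis
    proof (rule disjI2, rule notI)
      assume a: "p' - 1 \<in> D t'"
      have "p - 1 \<in> H t"
      proof (rule inH)
        show "p - 1 \<in> {1..L}" using False pL p2 pm by auto
        fix i assume i: "i \<in> {1..L}" "i \<le> p - 1 + 1" "p - 1 \<le> i + 1"
        show "i \<in> D t'"
        proof (cases "i = p - 2")
          case True then show ?thesis using a False by (simp add: p'_def numeral_2_eq_2)
        next
          case False
          then have "i \<in> {p'..m'}" using i \<open>p \<noteq> 1\<close> pm pL by (auto simp: p'_def m'_def)
          then show ?thesis using Dsub by auto
        qed
      qed
      then show False using lft False by auto
    qed
  qed
  have m2: "m \<noteq> L \<Longrightarrow> m + 1 \<noteq> L"
  proof
    assume ml: "m \<noteq> L" and m: "m + 1 = L"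
    have "L \<in> H t"
    proof (rule inH)
      show "L \<in> {1..L}" using pL m by auto
      fix i assume "i \<in> {1..L}" "L \<le> i + 1"
      then have "i \<in> {p'..m'}" using m ml pm pL by (auto simp: p'_def m'_def)
      then show "i \<in> D t'" using Dsub by auto
    qed
    then show False using rgt m ml by auto
  qed
  have rmax: "m' = L \<or> m' + 1 \<notin> D t'"
  proof (cases "m = L")
    case True then show ?thesis by (simp add: m'_def)
  next
    case False
    show ?thesis
    proof (rule disjI2, rule notI)
      assume a: "m' + 1 \<in> D t'"
      have "m + 1 \<in> H t"
      proof (rule inH)
        show "m + 1 \<in> {1..L}" using False pL pm by auto
        fix i assume i: "i \<in> {1..L}" "i \<le> m + 1 + 1" "m + 1 \<le> i + 1"
        show "i \<in> D t'"
        proof (cases "i = m + 2")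
          case True then show ?thesis using a False by (simp add: m'_def)
        next
          case False
          then have "i \<in> {p'..m'}" using i \<open>m \<noteq> L\<close> pm pL by (auto simp: p'_def m'_def)
          then show ?thesis using Dsub by auto
        qed
      qed
      then show False using rgt False by auto
    qed
  qed
  have "maxrun t' p' m'" unfolding maxrun_def
    using Dsub lmax rmax pL pm by (auto simp: p'_def m'_def)
  then obtain g where g: "SC t' p' m' g" using IH by blast
  have Zsub: "Z t' p' m' \<subseteq> Z t p m"
  proof
    fix u assume "u \<in> Z t' p' m'"
    then obtain i s j' where u: "u = (i,s)" "s \<le> t'" "p' \<le> j'" "j' \<le> m'" "flowN (t' - s) i s j'"
      unfolding Z_def by blast
    define j where "j = max p (min m j')"
    have jH: "j \<in> H (Suc (s + (t' - s)))" using sub t pm u(2) by (auto simp: j_def)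
    have "seg j' j \<subseteq> {p'..m'}" using u pm unfolding seg_def j_def p'_def m'_def by (auto simp: max_def min_def split: if_splits)
    then have "seg j' j \<subseteq> D (s + (t' - s))" using Dsub u(2) by auto
    from flow_app[OF u(5) jH this] have "flowN (t - s) i s j" using t u(2) by (simp add: Suc_diff_le)
    moreover have "p \<le> j" "j \<le> m" using pm by (auto simp: j_def)
    ultimately show "u \<in> Z t p m" using u t by (auto simp: Z_def)
  qed
  have "SC t p m g"
    unfolding SC_def
  proof (intro conjI)
    show "g \<noteq> []" "distinct g" "okc g" "\<forall>u\<in>set g. fst u \<in> Cl (snd u)" using g by (auto simp: SC_def)
    show "set g \<subseteq> Z t p m" using g Zsub by (auto simp: SC_def)
    show "m \<notin> H t \<longrightarrow> last g = (m, t)" using sub pm by auto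
    have sc: "startc t' p' g" and ec: "endc t' m' g" and len: "m' + 1 - p' + Kc g + kL t' p' g + kR t' m' g \<le> length g"
      using g by (auto simp: SC_def)
    have "startc t p g \<and> kL t p g = kL t' p' g + (if p = 1 then 0 else 1)"
    proof (cases "p = 1")
      case True then show ?thesis using sc by (simp add: startc_def kL_def p'_def)
    next
      case False
      then have pp: "p' = p - 1" "p - 1 \<noteq> 1" using p2 by (auto simp: p'_def)
      then have "fst (hd g) + (t' - snd (hd g)) = p - 1" "snd (hd g) \<le> t'"
        using sc unfolding startc_def by auto
      then show ?thesis using False pp pL unfolding startc_def kL_def t by auto
    qed
    then have A1: "startc t p g" "kL t p g = kL t' p' g + (if p = 1 then 0 else 1)" by simp_all
    then show "startc t p g" by simp
    have "endc t m g \<and> kR t m g = kR t' m' g + (if m = L then 0 else 1)"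
    proof (cases "m = L")
      case True then show ?thesis using ec by (simp add: endc_def kR_def m'_def)
    next
      case False
      then have mm: "m' = m + 1" "m + 1 \<noteq> L" using m2 by (auto simp: m'_def)
      then have "fst (last g) = m + 1 + (t' - snd (last g))" "snd (last g) \<le> t'"
        using ec unfolding endc_def by auto
      then show ?thesis using False mm unfolding endc_def kR_def t by auto
    qed
    then have A2: "endc t m g" "kR t m g = kR t' m' g + (if m = L then 0 else 1)" by simp_all
    then show "endc t m g" by simp
    note A1(2) A2(2)
    moreover have "m' + 1 - p' = (m + 1 - p) + (if p = 1 then 0 else 1) + (if m = L then 0 else 1)"
      using pm pL by (auto simp: p'_def m'_def)
    ultimately show "m + 1 - p + Kc g + kL t p g + kR t m g \<le> length g" using len by simp
  qed
  then show ?thesis by blast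
qed

lemma scan:
  assumes mr: "maxrun t x y" and IH: "\<forall>t'. t = Suc t' \<longrightarrow> (\<forall>x y. maxrun t' x y \<longrightarrow> (\<exists>g. SC t' x y g))"
  shows "x \<le> m \<Longrightarrow> m \<le> y \<Longrightarrow> \<not> (m \<in> H t \<and> m + 1 \<in> H t) \<Longrightarrow> \<exists>g. SC t x m g"
proof (induction m rule: less_induct)
  case (less m)
  have mr': "1 \<le> x" "y \<le> L" "{x..y} \<subseteq> D t" "x = 1 \<or> x - 1 \<notin> D t" using mr by (auto simp: maxrun_def)
  have mD: "m \<in> D t" using mr'(3) less.prems by auto
  show ?case
  proof (cases "m \<in> H t")
    case False
    then have mC: "m \<in> Cl t" using mD by (auto simp: D_def)
    show ?thesis
    proof (cases "m = x")
      case True then show ?thesis using SC_single[OF mC] by blast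
    next
      case False
      then have xm: "x \<le> m - 1" "m - 1 < m" using less.prems by auto
      have cut: "\<not> (m - 1 \<in> H t \<and> m - 1 + 1 \<in> H t)" using \<open>m \<notin> H t\<close> xm by auto
      have "m - 1 \<le> y" using less.prems by auto
      then obtain g1 where g1: "SC t x (m-1) g1" using less.IH[OF xm(2) xm(1) _ cut] by auto
      have g2: "SC t (m - 1 + 1) m [(m,t)]" using SC_single[OF mC] xm by simp
      have "SC t x m (g1 @ [(m,t)])"
        using SC_concat[OF g1 g2 cut] xm less.prems mr' by simp
      then show ?thesis by blast
    qed
  next
    case True
    then have mH1: "m + 1 \<notin> H t" using less.prems by auto
    obtain t' where t: "t = Suc t'" using True H0 by (cases t) auto
    define P where "P = {q. x \<le> q \<and> q \<le> m \<and> {q..m} \<subseteq> H t}"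
    have finP: "finite P" by (rule finite_subset[of _ "{..m}"]) (auto simp: P_def)
    have mP: "m \<in> P" using True less.prems by (auto simp: P_def)
    define p where "p = Min P"
    have pP: "p \<in> P" using finP mP unfolding p_def by (intro Min_in) auto
    then have pp: "x \<le> p" "p \<le> m" "{p..m} \<subseteq> H t" by (auto simp: P_def)
    have lft': "p = x \<or> p - 1 \<notin> H t"
    proof (rule ccontr)
      assume a: "\<not> (p = x \<or> p - 1 \<notin> H t)"
      have "{p - 1..m} \<subseteq> H t"
      proof
        fix z assume "z \<in> {p - 1..m}"
        then have "z = p - 1 \<or> z \<in> {p..m}" by auto
        then show "z \<in> H t" using a pp(3) by auto
      qed
      then have "p - 1 \<in> P" using pp a unfolding P_def by auto
      then have "p \<le> p - 1" using finP by (simp add: p_def)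
      then show False using a pp mr' by auto
    qed
    have lft: "p = 1 \<or> p - 1 \<notin> H t" using lft' mr'(4) H_D by auto
    have rgt: "m = L \<or> m + 1 \<notin> H t" using mH1 by simp
    have IH': "\<forall>x y. maxrun t' x y \<longrightarrow> (\<exists>g. SC t' x y g)" using IH t by simp
    obtain g2 where g2: "SC t p m g2" using SC_Hrun[OF IH' t pp(3) pp(2) lft rgt] by blast
    show ?thesis
    proof (cases "p = x")
      case True then show ?thesis using g2 by blast
    next
      case False
      then have npH: "p - 1 \<notin> H t" using lft' by simp
      have xp: "x \<le> p - 1" "p - 1 < m" using False pp by auto
      have cut: "\<not> (p - 1 \<in> H t \<and> p - 1 + 1 \<in> H t)" using npH by auto
      have "p - 1 \<le> y" using less.prems xp by auto
      then obtain g1 where g1: "SC t x (p-1) g1" using less.IH[OF xp(2) xp(1) _ cut] by auto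
      have l1: "last g1 = (p - 1, t)" using g1 npH by (auto simp: SC_def)
      have "p - 1 + 1 = p" using pp mr' by auto
      then have g2': "SC t (p - 1 + 1) m g2" using g2 by simp
      have "SC t x m (g1 @ g2)"
        using SC_concat[OF g1 g2' cut] l1 xp less.prems mr' pp by simp
      then show ?thesis by blast
    qed
  qed
qed

lemma main: "maxrun t x y \<Longrightarrow> \<exists>g. SC t x y g"
proof (induction t arbitrary: x y)
  case 0
  have "\<not> (y \<in> H 0 \<and> y + 1 \<in> H 0)" by (simp add: H0)
  then show ?case using scan[OF 0, of y] 0 by (auto simp: maxrun_def)
next
  case (Suc t)
  have "\<not> (y \<in> H (Suc t) \<and> y + 1 \<in> H (Suc t))"
    using Suc.prems H_sub[of "Suc t"] H_D[of "Suc t"] by (auto simp: maxrun_def)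
  then show ?case using scan[OF Suc.prems, of y] Suc.IH Suc.prems by (auto simp: maxrun_def)
qed

lemma extinct:
  assumes "act T = {}" "1 \<le> T" "1 \<le> L"
  shows "\<exists>g. g \<noteq> [] \<and> distinct g \<and> set g \<subseteq> {1..L} \<times> {..<T} \<and> (\<forall>u\<in>set g. \<not> X (fst u) (snd u))
     \<and> okc g \<and> fst (hd g) = 1 \<and> L + Kc g \<le> length g"
proof -
  obtain T' where T: "T = Suc T'" using assms(2) by (cases T) auto
  have HT: "H T = {1..L}" using assms(1) by (simp add: H_def)
  have "{1..L} \<subseteq> D T'"
  proof
    fix z assume z: "z \<in> {1..L}"
    then have "z \<in> H (Suc T')" using HT T by simp
    then show "z \<in> D T'" unfolding H_Suc using z by auto
  qed
  then have "maxrun T' 1 L" using assms(3) by (simp add: maxrun_def)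
  then obtain g where g: "SC T' 1 L g" using main by blast
  have "set g \<subseteq> {1..L} \<times> {..<T}"
  proof
    fix u assume u: "u \<in> set g"
    then have "u \<in> Z T' 1 L" "fst u \<in> Cl (snd u)" using g by (auto simp: SC_def)
    then show "u \<in> {1..L} \<times> {..<T}" using T by (auto simp: Z_def Cl_def)
  qed
  moreover have "\<forall>u\<in>set g. \<not> X (fst u) (snd u)" using g by (auto simp: SC_def Cl_def)
  moreover have "fst (hd g) = 1" "L + Kc g \<le> length g" using g by (auto simp: SC_def startc_def kL_def kR_def)
  ultimately show ?thesis using g by (auto simp: SC_def)
qed

end

lemma sum_Un_le_real: "finite A \<Longrightarrow> finite B \<Longrightarrow> (\<forall>x. 0 \<le> f x) \<Longrightarrow> sum f (A \<union> B) \<le> sum f A + sum f B"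
  for f :: "'a \<Rightarrow> real"
  by (simp add: sum_Un sum_nonneg)

lemma sum_UN_le_real:
  fixes f :: "'a \<Rightarrow> real"
  assumes "finite I" "\<forall>i\<in>I. finite (A i)" "\<forall>x. 0 \<le> f x"
  shows "sum f (\<Union>i\<in>I. A i) \<le> (\<Sum>i\<in>I. sum f (A i))"
  using assms
proof (induction I rule: finite_induct)
  case empty then show ?case by simp
next
  case (insert i I)
  have "sum f (\<Union>j\<in>insert i I. A j) = sum f (A i \<union> (\<Union>j\<in>I. A j))" by simp
  also have "\<dots> \<le> sum f (A i) + sum f (\<Union>j\<in>I. A j)"
    using insert by (intro sum_Un_le_real) auto
  also have "\<dots> \<le> sum f (A i) + (\<Sum>j\<in>I. sum f (A j))" using insert by auto
  finally show ?case using insert by simp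
qed

lemma geo_tenth: "(\<Sum>c\<in>{1..N::nat}. (1/10::real)^c) \<le> 1/9"
proof -
  have "(\<Sum>c\<in>{1..N::nat}. (1/10::real)^c) = (1 - (1/10)^N) / 9"
  proof (induction N)
    case 0 then show ?case by simp
  next
    case (Suc N)
    have "{1..Suc N} = insert (Suc N) {1..N}" by auto
    then have "(\<Sum>c\<in>{1..Suc N}. (1/10::real)^c) = (1/10)^Suc N + (\<Sum>c\<in>{1..N}. (1/10::real)^c)" by simp
    also have "\<dots> = (1/10)^Suc N + (1 - (1/10)^N) / 9" using Suc by simp
    also have "\<dots> = (1 - (1/10::real)^Suc N) / 9" by (simp add: field_simps)
    finally show ?case .
  qed
  also have "\<dots> \<le> 1/9" by (simp add: field_simps)
  finally show ?thesis .
qed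

lemma succ_sum:
  assumes fin: "finite S" and al: "\<forall>v\<in>S. allowed u v"
  shows "(\<Sum>v\<in>S. (1/10::real)^cost u v) \<le> 11/9"
proof -
  define a where "a = fst u"
  define b where "b = snd u"
  define f where "f v = (1/10::real)^cost u v" for v
  define g1 where "g1 c = (a + 1 - c, b - c)" for c
  define g2 where "g2 c = (a + 1 - c, b + c)" for c
  define A where "A = insert (a+1, b) (g1 ` {1..a+1} \<union> g2 ` {1..a+1})"
  have SA: "S \<subseteq> A"
  proof
    fix v assume v: "v \<in> S"
    obtain v1 v2 where vv: "v = (v1, v2)" by (cases v)
    have "allowed u v" using al v by auto
    then have "v = (a+1,b) \<or> (v1 \<le> a \<and> (v2 + (a - v1) + 1 = b \<or> v2 = b + (a - v1) + 1))"
      unfolding allowed_def a_def b_def vv by auto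
    then show "v \<in> A"
    proof
      assume "v = (a+1,b)" then show ?thesis by (simp add: A_def)
    next
      assume h: "v1 \<le> a \<and> (v2 + (a - v1) + 1 = b \<or> v2 = b + (a - v1) + 1)"
      define c where "c = a + 1 - v1"
      have c: "c \<in> {1..a+1}" "v1 = a + 1 - c" using h by (auto simp: c_def)
      from h have "v = g1 c \<or> v = g2 c" unfolding g1_def g2_def vv c_def by auto
      then show ?thesis using c unfolding A_def by blast
    qed
  qed
  have f0: "\<forall>x. 0 \<le> f x" by (simp add: f_def)
  have f1: "f (g1 c) = (1/10)^c" "f (g2 c) = (1/10)^c" if "c \<in> {1..a+1}" for c
    using that by (auto simp: f_def g1_def g2_def cost_def a_def b_def)
  have "(\<Sum>v\<in>S. f v) \<le> (\<Sum>v\<in>A. f v)"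
    apply (rule sum_mono2)
      apply (simp add: A_def)
     apply (rule SA)
    apply (simp add: f0)
    done
  also have "\<dots> \<le> f (a+1,b) + (\<Sum>v\<in>g1 ` {1..a+1} \<union> g2 ` {1..a+1}. f v)"
    unfolding A_def by (simp add: sum.insert_if f0)
  also have "(\<Sum>v\<in>g1 ` {1..a+1} \<union> g2 ` {1..a+1}. f v) \<le> (\<Sum>v\<in>g1 ` {1..a+1}. f v) + (\<Sum>v\<in>g2 ` {1..a+1}. f v)"
    by (rule sum_Un_le_real) (auto simp: f0)
  also have "(\<Sum>v\<in>g1 ` {1..a+1}. f v) \<le> (\<Sum>c\<in>{1..a+1}. (f \<circ> g1) c)"
    by (rule sum_image_le) (auto simp: f0)
  also have "\<dots> = (\<Sum>c\<in>{1..a+1}. (1/10)^c)" using f1 by (intro sum.cong) auto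
  also have "(\<Sum>v\<in>g2 ` {1..a+1}. f v) \<le> (\<Sum>c\<in>{1..a+1}. (f \<circ> g2) c)"
    by (rule sum_image_le) (auto simp: f0)
  also have "\<dots> = (\<Sum>c\<in>{1..a+1}. (1/10)^c)" using f1 by (intro sum.cong) auto
  also have "f (a+1,b) = 1" by (simp add: f_def cost_def a_def b_def)
  finally have "(\<Sum>v\<in>S. f v) \<le> 1 + 2 * (\<Sum>c\<in>{1..a+1}. (1/10::real)^c)" by simp
  also have "\<dots> \<le> 1 + 2 * (1/9)" using geo_tenth[of "a+1"] by simp
  finally show ?thesis by (simp add: f_def)
qed

definition chainsN :: "(nat\<times>nat) set \<Rightarrow> nat\<times>nat \<Rightarrow> nat \<Rightarrow> (nat\<times>nat) list set" where
"chainsN B u n = {g. length g = Suc n \<and> hd g = u \<and> set g \<subseteq> B \<and> okc g}"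

lemma chainsN_fin: "finite B \<Longrightarrow> finite (chainsN B u n)"
  by (rule finite_subset[OF _ finite_lists_length_eq[of B "Suc n"]]) (auto simp: chainsN_def)

lemma chains_sum:
  assumes B: "finite B"
  shows "(\<Sum>g\<in>chainsN B u n. (1/10::real)^Kc g) \<le> (11/9)^n"
proof (induction n arbitrary: u)
  case 0
  have "chainsN B u 0 \<subseteq> {[u]}" by (auto simp: chainsN_def length_Suc_conv)
  then have "(\<Sum>g\<in>chainsN B u 0. (1/10::real)^Kc g) \<le> (\<Sum>g\<in>{[u]}. (1/10::real)^Kc g)"
    by (intro sum_mono2) auto
  then show ?case by simp
next
  case (Suc n)
  define S where "S = {v\<in>B. allowed u v}"
  define U where "U = (\<Union>v\<in>S. chainsN B v n)"
  have finS: "finite S" using B by (simp add: S_def)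
  have sub: "chainsN B u (Suc n) \<subseteq> (Cons u) ` U"
  proof
    fix g assume g: "g \<in> chainsN B u (Suc n)"
    then obtain g' where g': "g = u # g'" "length g' = Suc n"
      by (auto simp: chainsN_def length_Suc_conv)
    then obtain v r where vr: "g' = v # r" by (cases g') auto
    have "v \<in> S" "g' \<in> chainsN B v n" using g g' vr by (auto simp: chainsN_def S_def)
    then show "g \<in> (Cons u) ` U" using g' unfolding U_def by blast
  qed
  have finU: "finite U" unfolding U_def using finS chainsN_fin[OF B] by auto
  have "(\<Sum>g\<in>chainsN B u (Suc n). (1/10::real)^Kc g) \<le> (\<Sum>g\<in>(Cons u) ` U. (1/10::real)^Kc g)"
    by (intro sum_mono2 finite_imageI finU sub) auto
  also have "\<dots> = (\<Sum>g\<in>U. (1/10::real)^Kc (u # g))"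
    by (subst sum.reindex) (auto simp: inj_on_def)
  also have "\<dots> \<le> (\<Sum>v\<in>S. \<Sum>g\<in>chainsN B v n. (1/10::real)^Kc (u # g))"
    unfolding U_def by (rule sum_UN_le_real) (auto simp: finS chainsN_fin[OF B])
  also have "\<dots> = (\<Sum>v\<in>S. (1/10::real)^cost u v * (\<Sum>g\<in>chainsN B v n. (1/10::real)^Kc g))"
  proof (rule sum.cong[OF refl])
    fix v assume "v \<in> S"
    have "(1/10::real)^Kc (u # g) = (1/10)^cost u v * (1/10)^Kc g" if "g \<in> chainsN B v n" for g
    proof -
      have "g \<noteq> []" "hd g = v" using that by (auto simp: chainsN_def)
      then have "g = v # tl g" by (metis list.collapse)
      then have "Kc (u # g) = cost u v + Kc g" by (metis Kc.simps(1))
      then show ?thesis by (simp add: power_add)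
    qed
    then show "(\<Sum>g\<in>chainsN B v n. (1/10::real)^Kc (u # g)) = (1/10::real)^cost u v * (\<Sum>g\<in>chainsN B v n. (1/10::real)^Kc g)"
      by (simp add: sum_distrib_left)
  qed
  also have "\<dots> \<le> (\<Sum>v\<in>S. (1/10::real)^cost u v * (11/9)^n)"
    by (intro sum_mono mult_left_mono Suc.IH) auto
  also have "\<dots> = (\<Sum>v\<in>S. (1/10::real)^cost u v) * (11/9)^n" by (simp add: sum_distrib_right)
  also have "\<dots> \<le> 11/9 * (11/9)^n"
    by (intro mult_right_mono succ_sum finS) (auto simp: S_def)
  finally show ?case by simp
qed

context perc begin

lemma act_edge:
  assumes L2: "2 \<le> L"
  shows "j \<in> act t \<Longrightarrow> (\<exists>w. open_edge L X (j,t) w \<or> open_edge L X w (j,t)) \<and> (\<exists>i\<in>{1..L}. (open_adj L X)\<^sup>*\<^sup>* (i,0) (j,t))"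
proof (induction t arbitrary: j)
  case 0
  then have j: "1 \<le> j" "j \<le> L" by auto
  have "\<exists>w. open_edge L X (j,0) w \<or> open_edge L X w (j,0)"
  proof (cases "j + 1 \<le> L")
    case True then show ?thesis using open_edge.base[OF j(1) True] by blast
  next
    case False
    then have "j = (j - 1) + 1" "1 \<le> j - 1" "(j - 1) + 1 \<le> L" using j L2 by auto
    then show ?thesis using open_edge.base[of "j - 1" L X] by metis
  qed
  then show ?case using j by auto
next
  case (Suc t)
  from Suc.prems obtain i where i: "i \<in> act t" "X i t" "i \<le> j + 1" "j \<le> i + 1" and j: "j \<in> {1..L}" by auto
  from Suc.IH[OF i(1)] obtain w i0 where w: "open_edge L X (i,t) w \<or> open_edge L X w (i,t)"
    and i0: "i0 \<in> {1..L}" "(open_adj L X)\<^sup>*\<^sup>* (i0,0) (i,t)" by blast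
  have ex: "\<exists>w. open_edge L X (i,t) w \<or> open_edge L X w (i,t)" using w by blast
  have e: "open_edge L X (i,t) (j, t + 1)"
    using open_edge.up[OF ex i(2)] i j by auto
  then have "open_adj L X (i,t) (j, Suc t)" by (simp add: open_adj_def)
  then have "(open_adj L X)\<^sup>*\<^sup>* (i0,0) (j, Suc t)" using i0(2) by (rule rtranclp.rtrancl_into_rtrancl[rotated])
  then show ?case using e i0(1) by auto
qed

lemma edge_act: "open_edge L X u v \<Longrightarrow> fst u \<in> act (snd u) \<and> fst v \<in> act (snd v)"
proof (induction rule: open_edge.induct)
  case (base i) then show ?case by auto
next
  case (up i t j)
  then have "i \<in> act t" by auto
  then show ?case using up by auto
qed

lemma reaches_iff:
  assumes "2 \<le> L" "1 \<le> T"
  shows "reaches L X T \<longleftrightarrow> act T \<noteq> {}"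
proof
  assume "reaches L X T"
  then obtain i j where "(open_adj L X)\<^sup>*\<^sup>* (i, 0) (j, T)" by (auto simp: reaches_def)
  then show "act T \<noteq> {}"
  proof (cases rule: rtranclp.cases)
    case rtrancl_refl then show ?thesis using assms by simp
  next
    case (rtrancl_into_rtrancl b)
    then have "open_edge L X b (j,T) \<or> open_edge L X (j,T) b" by (auto simp: open_adj_def)
    then have "j \<in> act T" using edge_act by fastforce
    then show ?thesis by auto
  qed
next
  assume "act T \<noteq> {}"
  then obtain j where j: "j \<in> act T" by auto
  then have "j \<in> {1..L}" using act_sub[of T] by blast
  then show "reaches L X T" unfolding reaches_def using act_edge[OF assms(1) j] by blast
qed

end

lemma act_meas:
  assumes "\<And>x. E x \<in> sets M"
  shows "{\<omega>\<in>space M. j \<in> perc.act L (\<lambda>i t. \<omega> \<in> E (i,t)) t} \<in> sets M"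
proof (induction t arbitrary: j)
  case 0
  show ?case by (cases "j \<in> {1..L}") (auto simp: perc.act.simps)
next
  case (Suc t)
  have eq: "{\<omega>\<in>space M. j \<in> perc.act L (\<lambda>i t. \<omega> \<in> E (i,t)) (Suc t)} =
    (if j \<in> {1..L} then (\<Union>i\<in>{i\<in>{1..L}. i \<le> j + 1 \<and> j \<le> i + 1}.
        {\<omega>\<in>space M. i \<in> perc.act L (\<lambda>i t. \<omega> \<in> E (i,t)) t} \<inter> E (i,t)) else {})"
  proof -
    have sub: "\<And>\<omega> i. i \<in> perc.act L (\<lambda>i t. \<omega> \<in> E (i,t)) t \<Longrightarrow> i \<in> {1..L}"
      using perc.act_sub by blast
    show ?thesis
      apply (auto simp: perc.act.simps)
      using sub by fastforce
  qed
  show ?case unfolding eq using Suc assms by auto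
qed

lemma indep_compl:
  assumes "prob_space M" "prob_space.indep_events M E UNIV" "finite J" "J \<noteq> {}"
  shows "measure M (\<Inter>j\<in>J. space M - E j) = (\<Prod>j\<in>J. measure M (space M - E j))"
proof -
  interpret prob_space M by fact
  have "indep_sets (\<lambda>i. {E i}) UNIV" using assms(2) by (simp add: indep_events_def_alt)
  then have "indep_sets (\<lambda>i. sigma_sets (space M) {E i}) UNIV"
    by (rule indep_sets_sigma) (auto simp: Int_stable_def)
  then have "\<forall>A\<in>Pi J (\<lambda>i. sigma_sets (space M) {E i}). prob (\<Inter>j\<in>J. A j) = (\<Prod>j\<in>J. prob (A j))"
    using assms(3,4) unfolding indep_sets_def by blast
  moreover have "(\<lambda>j. space M - E j) \<in> Pi J (\<lambda>i. sigma_sets (space M) {E i})"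
    by (auto intro: sigma_sets.Compl)
  ultimately show ?thesis by blast
qed

lemma key_bound:
  assumes M: "prob_space M" and ind: "prob_space.indep_events M E UNIV"
    and Ep: "\<forall>x. E x \<in> sets M \<and> measure M (E x) \<ge> 0.99"
    and L2: "2 \<le> L" and T1: "1 \<le> T"
  shows "measure M {\<omega> \<in> space M. reaches L (\<lambda>i t. \<omega> \<in> E (i,t)) T} \<ge> 1 - real T * (1/10)^L"
proof -
  interpret prob_space M by fact
  define Xo where "Xo \<omega> = (\<lambda>i t. \<omega> \<in> E (i,t))" for \<omega>
  define R where "R = {\<omega> \<in> space M. reaches L (Xo \<omega>) T}"
  define B where "B = {1..L} \<times> {..<T}"
  have finB: "finite B" by (simp add: B_def)
  define N where "N = card B"
  define CH where "CH = (\<Union>s\<in>{..<T}. \<Union>n\<in>{..<N}. chainsN B (1,s) n)"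
  define G where "G = {g \<in> CH. distinct g \<and> L + Kc g \<le> length g}"
  define Ev where "Ev g = {\<omega>\<in>space M. \<forall>u\<in>set g. \<omega> \<notin> E u}" for g
  have finCH: "finite CH" unfolding CH_def using chainsN_fin[OF finB] by auto
  have finG: "finite G" using finCH by (simp add: G_def)
  have Em: "E x \<in> sets M" for x using Ep by blast
  have Rm: "R \<in> sets M"
  proof -
    have "R = (\<Union>j\<in>{1..L}. {\<omega>\<in>space M. j \<in> perc.act L (Xo \<omega>) T})"
      unfolding R_def using perc.reaches_iff[OF L2 T1] perc.act_sub by blast
    also have "\<dots> \<in> sets M" unfolding Xo_def using act_meas[OF Em] by auto
    finally show ?thesis .
  qed
  have gne: "g \<noteq> []" if "g \<in> G" for g using that by (auto simp: G_def CH_def chainsN_def)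
  have EvI: "Ev g = (\<Inter>u\<in>set g. space M - E u)" if "g \<in> G" for g
    using gne[OF that] by (auto simp: Ev_def)
  have Evm: "Ev g \<in> sets M" if "g \<in> G" for g
    unfolding EvI[OF that] using gne[OF that] Em by auto
  have Evp: "measure M (Ev g) \<le> (1/100)^length g" if g: "g \<in> G" for g
  proof -
    have "measure M (Ev g) = (\<Prod>u\<in>set g. measure M (space M - E u))"
      unfolding EvI[OF g] using indep_compl[OF M ind, of "set g"] gne[OF g] by auto
    also have "\<dots> \<le> (\<Prod>u\<in>set g. (1/100::real))"
    proof (rule prod_mono)
      fix u assume "u \<in> set g"
      have "measure M (space M - E u) = 1 - measure M (E u)" using prob_compl[OF Em] .
      then show "0 \<le> measure M (space M - E u) \<and> measure M (space M - E u) \<le> 1/100"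
        using Ep[rule_format, of u] by auto
    qed
    also have "\<dots> = (1/100)^length g" using g by (simp add: G_def distinct_card)
    finally show ?thesis .
  qed
  define w where "w g = (1/10::real)^L * ((1/10)^length g * (1/10)^Kc g)" for g
  have w0: "\<forall>g. 0 \<le> w g" by (simp add: w_def)
  have Evw: "measure M (Ev g) \<le> w g" if g: "g \<in> G" for g
  proof -
    have le: "L + Kc g \<le> length g" using g by (simp add: G_def)
    have "(1/100::real)^length g = (1/10)^(length g + length g)"
      by (simp add: power_add power_mult_distrib[symmetric])
    also have "\<dots> \<le> (1/10)^(L + (length g + Kc g))"
      by (rule power_decreasing) (use le in auto)
    also have "\<dots> = w g" by (simp add: w_def power_add)
    finally show ?thesis using Evp[OF g] by simp
  qed
  have cover: "space M - R \<subseteq> (\<Union>g\<in>G. Ev g)"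
  proof
    fix \<omega> assume \<omega>: "\<omega> \<in> space M - R"
    then have "\<not> reaches L (Xo \<omega>) T" by (auto simp: R_def)
    then have "perc.act L (Xo \<omega>) T = {}" using perc.reaches_iff[OF L2 T1] by blast
    from perc.extinct[OF this T1] L2 obtain g where
      g: "g \<noteq> []" "distinct g" "set g \<subseteq> B" "\<forall>u\<in>set g. \<not> Xo \<omega> (fst u) (snd u)"
        "okc g" "fst (hd g) = 1" "L + Kc g \<le> length g"
      unfolding B_def by auto
    have hB: "hd g \<in> B" using g by auto
    have "length g = card (set g)" using g by (simp add: distinct_card)
    also have "\<dots> \<le> N" unfolding N_def by (rule card_mono[OF finB g(3)])
    finally have lN: "length g - 1 < N" using g(1) by (cases g) auto
    have "g \<in> chainsN B (1, snd (hd g)) (length g - 1)"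
      using g by (cases g) (auto simp: chainsN_def prod_eq_iff)
    moreover have "snd (hd g) < T" using hB by (auto simp: B_def)
    ultimately have "g \<in> CH" using lN unfolding CH_def by blast
    then have "g \<in> G" using g by (simp add: G_def)
    moreover have "\<omega> \<in> Ev g" using g \<omega> by (auto simp: Ev_def Xo_def)
    ultimately show "\<omega> \<in> (\<Union>g\<in>G. Ev g)" by blast
  qed
  have "measure M (space M - R) \<le> measure M (\<Union>g\<in>G. Ev g)"
    by (rule finite_measure_mono[OF cover]) (use finG Evm in auto)
  also have "\<dots> \<le> (\<Sum>g\<in>G. measure M (Ev g))"
    by (rule finite_measure_subadditive_finite) (use finG Evm in auto)
  also have "\<dots> \<le> (\<Sum>g\<in>G. w g)" by (rule sum_mono) (rule Evw)
  also have "\<dots> \<le> (\<Sum>g\<in>CH. w g)" by (rule sum_mono2[OF finCH]) (auto simp: G_def w0)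
  also have "\<dots> \<le> (\<Sum>s\<in>{..<T}. \<Sum>g\<in>(\<Union>n\<in>{..<N}. chainsN B (1,s) n). w g)"
    unfolding CH_def by (rule sum_UN_le_real) (auto simp: w0 chainsN_fin[OF finB])
  also have "\<dots> \<le> (\<Sum>s\<in>{..<T}. \<Sum>n\<in>{..<N}. \<Sum>g\<in>chainsN B (1,s) n. w g)"
    by (rule sum_mono, rule sum_UN_le_real) (auto simp: w0 chainsN_fin[OF finB])
  also have "\<dots> \<le> (\<Sum>s\<in>{..<T}. \<Sum>n\<in>{..<N}. (1/10::real)^L * ((1/10)^Suc n * (11/9)^n))"
  proof (intro sum_mono)
    fix s n
    have "(\<Sum>g\<in>chainsN B (1,s) n. w g) = (1/10::real)^L * ((1/10)^Suc n * (\<Sum>g\<in>chainsN B (1,s) n. (1/10)^Kc g))"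
      by (simp add: w_def sum_distrib_left chainsN_def)
    also have "\<dots> \<le> (1/10::real)^L * ((1/10)^Suc n * (11/9)^n)"
      using chains_sum[OF finB, of "(1,s)" n] by (intro mult_left_mono) auto
    finally show "(\<Sum>g\<in>chainsN B (1,s) n. w g) \<le> (1/10::real)^L * ((1/10)^Suc n * (11/9)^n)" .
  qed
  also have "\<dots> = real T * ((1/10::real)^L * ((1/10) * (\<Sum>n<N. (11/90::real)^n)))"
    by (simp add: sum_distrib_left power_mult_distrib[symmetric] mult.assoc)
  also have "\<dots> \<le> real T * (1/10::real)^L"
  proof -
    have "(\<Sum>n<N. (11/90::real)^n) = (1 - (11/90)^N) / (1 - 11/90)" by (simp add: sum_gp_strict)
    also have "\<dots> \<le> 90/79" by (simp add: field_simps)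
    finally have "(1/10) * (\<Sum>n<N. (11/90::real)^n) \<le> 1" by simp
    then show ?thesis by (intro mult_left_mono) (auto simp: mult_le_cancel_left1)
  qed
  finally have "measure M (space M - R) \<le> real T * (1/10)^L" .
  then show ?thesis using prob_compl[OF Rm] unfolding R_def Xo_def by simp
qed

theorem lemma4p5:
  fixes \<epsilon> :: real
  assumes "\<epsilon> > 0"
  shows "\<exists>L0::nat. \<forall>L\<ge>L0. \<forall>(M :: 'a measure) (E :: nat \<times> nat \<Rightarrow> 'a set).
           prob_space M \<longrightarrow> prob_space.indep_events M E UNIV \<longrightarrow>
           (\<forall>x. E x \<in> sets M \<and> measure M (E x) \<ge> 0.99) \<longrightarrow>
           measure M {\<omega> \<in> space M. reaches L (\<lambda>i t. \<omega> \<in> E (i, t)) (nat \<lceil>(1.01::real) ^ L\<rceil>)}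
             \<ge> 1 - \<epsilon>"
proof -
  obtain n0 where n0: "(101/1000::real)^n0 < \<epsilon>/2"
    using real_arch_pow_inv[of "\<epsilon>/2" "101/1000"] assms by auto
  show ?thesis
  proof (intro exI[of _ "max 2 n0"] allI impI)
    fix L :: nat and M :: "'a measure" and E :: "nat \<times> nat \<Rightarrow> 'a set"
    assume L: "max 2 n0 \<le> L" and M: "prob_space M" and ind: "prob_space.indep_events M E UNIV"
      and Ep: "\<forall>x. E x \<in> sets M \<and> measure M (E x) \<ge> 0.99"
    define T where "T = nat \<lceil>(1.01::real) ^ L\<rceil>"
    have p1: "(1::real) \<le> 1.01 ^ L" by (rule one_le_power) simp
    have T1: "1 \<le> T" unfolding T_def using p1 by linarith
    have TR: "real T \<le> 2 * (1.01::real)^L"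
    proof -
      have "real T = of_int \<lceil>(1.01::real) ^ L\<rceil>" unfolding T_def using p1 by simp
      also have "\<dots> \<le> (1.01::real)^L + 1" by linarith
      finally have "real T \<le> (1.01::real)^L + 1" .
      then show ?thesis using p1 by linarith
    qed
    have "real T * (1/10)^L \<le> 2 * (1.01::real)^L * (1/10)^L"
      using TR by (intro mult_right_mono) auto
    also have "\<dots> = 2 * (101/1000::real)^L" by (simp add: power_mult_distrib[symmetric])
    also have "\<dots> \<le> 2 * (101/1000::real)^n0"
      using L by (intro mult_left_mono power_decreasing) auto
    also have "\<dots> < \<epsilon>" using n0 by simp
    finally have small: "real T * (1/10)^L < \<epsilon>" .
    have "measure M {\<omega> \<in> space M. reaches L (\<lambda>i t. \<omega> \<in> E (i, t)) T} \<ge> 1 - real T * (1/10)^L"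
      using key_bound[OF M ind Ep _ T1] L by auto
    then show "measure M {\<omega> \<in> space M. reaches L (\<lambda>i t. \<omega> \<in> E (i, t)) (nat \<lceil>(1.01::real) ^ L\<rceil>)} \<ge> 1 - \<epsilon>"
      using small unfolding T_def by linarith
  qed
qed

end
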